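(* Let $R$ be an integral domain and $I$ an ideal of $R[X]$ such that $I\cap R$ is a maximal ideal of $R$. Then $I$ is power stable.
   Context: An ideal $I$ of the polynomial ring $R[X]$ over an integral domain $R$ is called power stable if $I^t\cap R = (I\cap R)^t$ for all integers $t\geq 1$. *)

theory Defs
  imports "HOL-Computational_Algebra.Polynomial"
begin

definition is_ideal :: "'a::comm_ring_1 set \<Rightarrow> bool" where
  "is_ideal I \<longleftrightarrow> 0 \<in> I \<and> (\<forall>x\<in>I. \<forall>y\<in>I. x + y \<in> I) \<and> (\<forall>r x. x \<in> I \<longrightarrow> r * x \<in> I)"

definition ideal_gen :: "'a::comm_ring_1 set \<Rightarrow> 'a set" where
  "ideal_gen S = \<Inter>{J. is_ideal J \<and> S \<subseteq> J}"

definition ideal_mult :: "'a::comm_ring_1 set \<Rightarrow> 'a set \<Rightarrow> 'a set" where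
  "ideal_mult I J = ideal_gen {i * j | i j. i \<in> I \<and> j \<in> J}"

primrec ideal_power :: "'a::comm_ring_1 set \<Rightarrow> nat \<Rightarrow> 'a set" where
  "ideal_power I 0 = UNIV"
| "ideal_power I (Suc n) = ideal_mult I (ideal_power I n)"

definition maximal_ideal :: "'a::comm_ring_1 set \<Rightarrow> bool" where
  "maximal_ideal M \<longleftrightarrow> is_ideal M \<and> M \<noteq> UNIV \<and>
     (\<forall>J. is_ideal J \<and> M \<subseteq> J \<longrightarrow> J = M \<or> J = UNIV)"

text \<open>The contraction \<open>I \<inter> R\<close> of an ideal of \<open>R[X]\<close>, with \<open>R\<close> embedded as constants.\<close>
definition contract :: "'a::comm_ring_1 poly set \<Rightarrow> 'a set" where
  "contract I = {a. [:a:] \<in> I}"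

definition power_stable :: "'a::idom poly set \<Rightarrow> bool" where
  "power_stable I \<longleftrightarrow> (\<forall>t::nat. t \<ge> 1 \<longrightarrow> contract (ideal_power I t) = ideal_power (contract I) t)"

end

theory Submission
  imports Defs
begin

definition CI :: "'a::comm_ring_1 set \<Rightarrow> 'a poly \<Rightarrow> bool" where
  "CI M p \<longleftrightarrow> (\<forall>k. coeff p k \<in> M)"

lemma ideal_zero: "is_ideal I \<Longrightarrow> 0 \<in> I"
  by (simp add: is_ideal_def)
lemma ideal_add: "is_ideal I \<Longrightarrow> x \<in> I \<Longrightarrow> y \<in> I \<Longrightarrow> x + y \<in> I"
  by (simp add: is_ideal_def)
lemma ideal_lmult: "is_ideal I \<Longrightarrow> x \<in> I \<Longrightarrow> r * x \<in> I"
  by (simp add: is_ideal_def)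
lemma ideal_rmult: "is_ideal I \<Longrightarrow> x \<in> I \<Longrightarrow> x * r \<in> I"
  by (simp add: is_ideal_def mult.commute)
lemma ideal_neg: "is_ideal I \<Longrightarrow> x \<in> I \<Longrightarrow> - x \<in> I"
  using ideal_lmult[of I x "-1"] by simp
lemma ideal_diff: "is_ideal I \<Longrightarrow> x \<in> I \<Longrightarrow> y \<in> I \<Longrightarrow> x - y \<in> I"
  using ideal_add[of I x "-y"] ideal_neg[of I y] by simp
lemma ideal_sum: "is_ideal I \<Longrightarrow> (\<And>x. x \<in> A \<Longrightarrow> f x \<in> I) \<Longrightarrow> sum f A \<in> I"
  by (induct A rule: infinite_finite_induct) (auto simp: ideal_zero ideal_add)

lemma ideal_gen_ideal: "is_ideal (ideal_gen S)"
  unfolding is_ideal_def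
proof (intro conjI ballI allI impI)
  show "0 \<in> ideal_gen S" unfolding ideal_gen_def is_ideal_def by blast
next
  fix x y assume "x \<in> ideal_gen S" "y \<in> ideal_gen S"
  then show "x + y \<in> ideal_gen S" unfolding ideal_gen_def is_ideal_def by blast
next
  fix r x assume "x \<in> ideal_gen S"
  then show "r * x \<in> ideal_gen S" unfolding ideal_gen_def is_ideal_def by blast
qed
lemma ideal_gen_sub: "S \<subseteq> ideal_gen S"
  unfolding ideal_gen_def by auto
lemma ideal_gen_least: "is_ideal J \<Longrightarrow> S \<subseteq> J \<Longrightarrow> ideal_gen S \<subseteq> J"
  unfolding ideal_gen_def by auto

lemma ideal_mult_ideal: "is_ideal (ideal_mult A B)"
  unfolding ideal_mult_def by (rule ideal_gen_ideal)
lemma ideal_mult_mem: "a \<in> A \<Longrightarrow> b \<in> B \<Longrightarrow> a * b \<in> ideal_mult A B"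
  unfolding ideal_mult_def by (rule subsetD[OF ideal_gen_sub]) blast

lemma ideal_UNIV: "is_ideal UNIV"
  by (simp add: is_ideal_def)

lemma ideal_power_ideal: "is_ideal (ideal_power I t)"
  by (cases t) (simp_all only: ideal_power.simps ideal_UNIV ideal_mult_ideal)

lemma contract_ideal: "is_ideal I \<Longrightarrow> is_ideal (contract I)"
proof -
  assume I: "is_ideal I"
  show ?thesis unfolding is_ideal_def
  proof (intro conjI ballI allI impI)
    show "0 \<in> contract I" using I unfolding contract_def is_ideal_def by simp
  next
    fix x y assume "x \<in> contract I" "y \<in> contract I"
    then have "[:x:] + [:y:] \<in> I" using I unfolding contract_def is_ideal_def by blast
    then show "x + y \<in> contract I" unfolding contract_def by simp
  next
    fix r x assume "x \<in> contract I"
    then have "[:r:] * [:x:] \<in> I" using I unfolding contract_def is_ideal_def by blast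
    then show "r * x \<in> contract I" unfolding contract_def by (simp add: mult.commute)
  qed
qed

lemma easy_dir: "is_ideal I \<Longrightarrow> ideal_power (contract I) t \<subseteq> contract (ideal_power I t)"
proof (induction t)
  case 0
  then show ?case by (simp add: contract_def)
next
  case (Suc t)
  have "is_ideal (contract (ideal_power I (Suc t)))"
    by (rule contract_ideal[OF ideal_power_ideal])
  moreover have "{i * j |i j. i \<in> contract I \<and> j \<in> ideal_power (contract I) t}
      \<subseteq> contract (ideal_power I (Suc t))"
  proof clarify
    fix i j assume "i \<in> contract I" "j \<in> ideal_power (contract I) t"
    then have "[:i:] \<in> I" "[:j:] \<in> ideal_power I t" using Suc by (auto simp: contract_def)
    then have "[:i:] * [:j:] \<in> ideal_power I (Suc t)"
      unfolding ideal_power.simps by (rule ideal_mult_mem)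
    then show "i * j \<in> contract (ideal_power I (Suc t))" by (simp add: contract_def mult.commute)
  qed
  ultimately show ?case unfolding ideal_power.simps ideal_mult_def
    by (rule ideal_gen_least)
qed

lemma CI_mult_left: "is_ideal M \<Longrightarrow> CI M p \<Longrightarrow> CI M (p * q)"
  unfolding CI_def coeff_mult by (auto intro!: ideal_sum ideal_rmult)

lemma CI_mult_right: "is_ideal M \<Longrightarrow> CI M p \<Longrightarrow> CI M (q * p)"
  using CI_mult_left[of M p q] by (simp add: mult.commute)

lemma CI_mult2: "CI A p \<Longrightarrow> CI B q \<Longrightarrow> CI (ideal_mult A B) (p * q)"
  unfolding CI_def coeff_mult by (auto intro!: ideal_sum ideal_mult_ideal ideal_mult_mem)

lemma CI_add: "is_ideal M \<Longrightarrow> CI M p \<Longrightarrow> CI M q \<Longrightarrow> CI M (p + q)"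
  unfolding CI_def by (auto intro: ideal_add)

lemma CI_in_ideal: "is_ideal I \<Longrightarrow> CI (contract I) p \<Longrightarrow> p \<in> I"
proof (induct p rule: pCons_induct)
  case 0
  then show ?case by (simp add: ideal_zero)
next
  case (pCons a p)
  have "coeff (pCons a p) 0 \<in> contract I" using pCons(4) unfolding CI_def by blast
  then have a: "[:a:] \<in> I" unfolding contract_def by simp
  have "CI (contract I) p" unfolding CI_def
  proof
    fix k
    have "coeff (pCons a p) (Suc k) \<in> contract I" using pCons(4) unfolding CI_def by blast
    then show "coeff p k \<in> contract I" by simp
  qed
  then have "p \<in> I" using pCons by blast
  then have "[:0,1:] * p \<in> I" by (rule ideal_lmult[OF pCons(3)])
  then have "[:a:] + [:0,1:] * p \<in> I" by (rule ideal_add[OF pCons(3) a])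
  moreover have eq: "pCons a p = [:a:] + [:0,1:] * p" by simp
  ultimately show ?case by (subst eq)
qed

lemma monic_CI:
  fixes f q :: "'a::idom poly"
  assumes M: "is_ideal M" and f: "lead_coeff f = 1" "degree f \<ge> 1"
    and h: "\<forall>k\<ge>1. coeff (f * q) k \<in> M"
  shows "CI M q"
  using h
proof (induction "degree q" arbitrary: q rule: less_induct)
  case less
  show ?case
  proof (cases "q = 0")
    case True
    then show ?thesis by (simp add: CI_def ideal_zero M)
  next
    case False
    define a where "a = lead_coeff q"
    define n where "n = degree q"
    have f0: "f \<noteq> 0" using f by auto
    have "degree (f * q) = degree f + n" unfolding n_def by (rule degree_mult_eq[OF f0 False])
    moreover have "lead_coeff (f * q) = a" unfolding a_def by (simp add: lead_coeff_mult f)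
    ultimately have "coeff (f * q) (degree f + n) = a" by simp
    moreover have "degree f + n \<ge> 1" using f by simp
    ultimately have aM: "a \<in> M" using less.prems by auto
    define q' where "q' = q - monom a n"
    have cm: "CI M (monom a n)" unfolding CI_def using aM by (simp add: coeff_monom ideal_zero M)
    then have cfm: "CI M (f * monom a n)" by (rule CI_mult_right[OF M])
    have h': "\<forall>k\<ge>1. coeff (f * q') k \<in> M"
    proof (intro allI impI)
      fix k :: nat assume "k \<ge> 1"
      have "coeff (f * q') k = coeff (f * q) k - coeff (f * monom a n) k"
        unfolding q'_def by (simp add: right_diff_distrib)
      moreover have "coeff (f * q) k \<in> M" using less.prems \<open>k \<ge> 1\<close> by blast
      moreover have "coeff (f * monom a n) k \<in> M" using cfm unfolding CI_def by blast
      ultimately show "coeff (f * q') k \<in> M" using ideal_diff[OF M] by simp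
    qed
    have "CI M q'"
    proof (cases "q' = 0")
      case True
      then show ?thesis by (simp add: CI_def ideal_zero M)
    next
      case False
      have dle: "degree q' \<le> n" unfolding q'_def n_def
        by (rule degree_diff_le) (auto simp: degree_monom_le)
      have "coeff q' n = 0" unfolding q'_def a_def n_def by simp
      have "degree q' \<noteq> n"
      proof
        assume "degree q' = n"
        then have "lead_coeff q' = 0" using \<open>coeff q' n = 0\<close> by simp
        then show False using False by simp
      qed
      with dle have "degree q' < degree q" unfolding n_def by simp
      then show ?thesis using less.hyps h' by blast
    qed
    moreover have "q = q' + monom a n" unfolding q'_def by simp
    ultimately show ?thesis using CI_add[OF M _ cm, of q'] by simp
  qed
qed

lemma max_witness:
  assumes M: "is_ideal M" and k: "coeff p k \<notin> M"
  shows "coeff p (Max {k. coeff p k \<notin> M}) \<notin> M"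
    "\<forall>j > Max {k. coeff p k \<notin> M}. coeff p j \<in> M"
    "Max {k. coeff p k \<notin> M} \<le> degree p"
proof -
  have sub: "{k. coeff p k \<notin> M} \<subseteq> {..degree p}"
  proof
    fix j assume "j \<in> {k. coeff p k \<notin> M}"
    then have "coeff p j \<noteq> 0" using ideal_zero[OF M] by auto
    then show "j \<in> {..degree p}" using le_degree by auto
  qed
  then have fin: "finite {k. coeff p k \<notin> M}" using finite_subset by blast
  have ne: "{k. coeff p k \<notin> M} \<noteq> {}" using k by auto
  show "coeff p (Max {k. coeff p k \<notin> M}) \<notin> M" using Max_in[OF fin ne] by simp
  show "\<forall>j > Max {k. coeff p k \<notin> M}. coeff p j \<in> M"
    using Max_ge[OF fin] by (meson mem_Collect_eq not_le)
  show "Max {k. coeff p k \<notin> M} \<le> degree p" using Max_in[OF fin ne] sub by auto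
qed

lemma monic_division:
  fixes f q :: "'a::comm_ring_1 poly"
  assumes "lead_coeff f = 1"
  shows "\<exists>s r. q = f * s + r \<and> (r = 0 \<or> degree r < degree f)"
proof -
  have f0: "f \<noteq> 0" using assms by auto
  obtain s r where sr: "pseudo_divmod q f = (s, r)" by (cases "pseudo_divmod q f") auto
  from pseudo_divmod[OF f0 sr] assms show ?thesis by auto
qed

lemma key:
  fixes I :: "'a::idom poly set"
  assumes I: "is_ideal I" and mx: "maximal_ideal (contract I)"
  shows "\<exists>f. lead_coeff f = 1 \<and> degree f \<ge> 1 \<and>
           (\<forall>q\<in>I. \<exists>g s. q = g + f * s \<and> CI (contract I) g)"
proof -
  define m where "m = contract I"
  have m: "is_ideal m" "m \<noteq> UNIV" "\<And>J. is_ideal J \<Longrightarrow> m \<subseteq> J \<Longrightarrow> J = m \<or> J = UNIV"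
    using mx unfolding maximal_ideal_def m_def by auto
  show ?thesis
  proof (cases "\<forall>q\<in>I. CI m q")
    case True
    show ?thesis
    proof (rule exI[of _ "[:0,1:]"], intro conjI ballI)
      fix q assume "q \<in> I"
      then have "q = q + [:0,1:] * 0 \<and> CI (contract I) q" using True m_def by simp
      then show "\<exists>g s. q = g + [:0,1:] * s \<and> CI (contract I) g" by blast
    qed simp_all
  next
    case False
    then obtain q0 k0 where q0: "q0 \<in> I" "coeff q0 k0 \<notin> m" unfolding CI_def by auto
    define P where "P d \<longleftrightarrow> (\<exists>p\<in>I. coeff p d \<notin> m \<and> (\<forall>k>d. coeff p k \<in> m))" for d
    have Pw: "P (Max {k. coeff p k \<notin> m})" if "p \<in> I" "coeff p k \<notin> m" for p k
      unfolding P_def using max_witness[OF m(1) that(2)] that(1) by blast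
    define d where "d = (LEAST d. P d)"
    have Pd: "P d" unfolding d_def using Pw[OF q0] by (rule LeastI)
    have dmin: "d \<le> d'" if "P d'" for d' unfolding d_def using that by (rule Least_le)
    obtain p where p: "p \<in> I" "coeff p d \<notin> m" "\<forall>k>d. coeff p k \<in> m"
      using Pd unfolding P_def by blast
    define u where "u = coeff p d"
    define J where "J = {x + r * u | x r. x \<in> m}"
    have J: "is_ideal J" unfolding is_ideal_def J_def
    proof (intro conjI ballI allI impI)
      show "0 \<in> {x + r * u |x r. x \<in> m}" using ideal_zero[OF m(1)] by force
    next
      fix a b assume "a \<in> {x + r * u |x r. x \<in> m}" "b \<in> {x + r * u |x r. x \<in> m}"
      then obtain x1 r1 x2 r2 where "a = x1 + r1 * u" "x1 \<in> m" "b = x2 + r2 * u" "x2 \<in> m" by auto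
      then show "a + b \<in> {x + r * u |x r. x \<in> m}"
        by (intro CollectI exI[of _ "x1 + x2"] exI[of _ "r1 + r2"])
           (auto simp: algebra_simps ideal_add[OF m(1)])
    next
      fix s a assume "a \<in> {x + r * u |x r. x \<in> m}"
      then obtain x1 r1 where "a = x1 + r1 * u" "x1 \<in> m" by auto
      then show "s * a \<in> {x + r * u |x r. x \<in> m}"
        by (intro CollectI exI[of _ "s * x1"] exI[of _ "s * r1"])
           (auto simp: algebra_simps ideal_lmult[OF m(1)])
    qed
    have mJ: "m \<subseteq> J" unfolding J_def by force
    have "u \<in> J" unfolding J_def using ideal_zero[OF m(1)] by force
    with p(2) have "J \<noteq> m" unfolding u_def by auto
    then have "J = UNIV" using m(3)[OF J mJ] by auto
    then have "1 \<in> J" by auto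
    then obtain x v where xv: "x \<in> m" "1 = x + v * u" unfolding J_def by auto
    define f where "f = monom 1 d + (\<Sum>k<d. monom (v * coeff p k) k)"
    have cf: "coeff f k = (if k < d then v * coeff p k else if k = d then 1 else 0)" for k
      unfolding f_def by (auto simp: coeff_sum coeff_monom)
    have degf: "degree f = d"
    proof (rule antisym)
      show "degree f \<le> d" by (rule degree_le) (auto simp: cf)
      show "d \<le> degree f" by (rule le_degree) (simp add: cf)
    qed
    have lf: "lead_coeff f = 1" by (simp add: degf cf)
    have "CI m (f - smult v p)" unfolding CI_def
    proof
      fix k
      consider "k < d" | "k = d" | "k > d" by linarith
      then show "coeff (f - smult v p) k \<in> m"
      proof cases
        case 1 then show ?thesis by (simp add: cf ideal_zero[OF m(1)])
      next
        case 2
        have "1 - v * u = x" using xv by (simp add: algebra_simps)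
        then show ?thesis using 2 xv by (simp add: cf u_def)
      next
        case 3
        then have "- (v * coeff p k) \<in> m" using p(3) by (simp add: ideal_lmult ideal_neg m(1))
        then show ?thesis using 3 by (simp add: cf)
      qed
    qed
    then have "f - smult v p \<in> I" using CI_in_ideal[OF I] unfolding m_def by blast
    moreover have "smult v p \<in> I" using ideal_lmult[OF I p(1), of "[:v:]"] by simp
    ultimately have fI: "f \<in> I" using ideal_add[OF I] by fastforce
    have d1: "d \<ge> 1"
    proof (rule ccontr)
      assume "\<not> d \<ge> 1"
      then have "d = 0" by simp
      then have "f = [:1:]" by (intro poly_eqI) (auto simp: cf coeff_pCons split: nat.split)
      then have "1 \<in> m" using fI unfolding m_def contract_def by simp
      then have "r \<in> m" for r using ideal_lmult[OF m(1), of 1 r] by simp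
      then show False using m(2) by auto
    qed
    show ?thesis
    proof (rule exI[of _ f], intro conjI ballI)
      show "lead_coeff f = 1" by (rule lf)
      show "1 \<le> degree f" using d1 degf by simp
      fix q assume q: "q \<in> I"
      obtain s r where sr: "q = f * s + r" "r = 0 \<or> degree r < degree f"
        using monic_division[OF lf] by blast
      have "f * s \<in> I" using ideal_rmult[OF I fI] by blast
      then have rI: "r \<in> I" using ideal_diff[OF I q, of "f * s"] sr(1) by simp
      have "CI m r" unfolding CI_def
      proof (rule ccontr)
        assume "\<not> (\<forall>k. coeff r k \<in> m)"
        then obtain k where k: "coeff r k \<notin> m" by auto
        have "r \<noteq> 0"
        proof
          assume "r = 0"
          then show False using k ideal_zero[OF m(1)] by simp
        qed
        then have "degree r < d" using sr(2) degf by simp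
        moreover have "Max {k. coeff r k \<notin> m} \<le> degree r" by (rule max_witness(3)[OF m(1) k])
        moreover have "d \<le> Max {k. coeff r k \<notin> m}" using dmin[OF Pw[OF rI k]] .
        ultimately show False by simp
      qed
      then show "\<exists>g s. q = g + f * s \<and> CI (contract I) g"
        using sr(1) unfolding m_def by (metis add.commute)
    qed
  qed
qed

lemma S_ideal:
  fixes f :: "'a::comm_ring_1 poly"
  assumes M: "is_ideal M"
  shows "is_ideal {g + f * s | g s. CI M g}"
  unfolding is_ideal_def
proof (intro conjI ballI allI impI)
  show "0 \<in> {g + f * s |g s. CI M g}"
    by (intro CollectI exI[of _ 0]) (simp add: CI_def ideal_zero M)
next
  fix a b assume "a \<in> {g + f * s |g s. CI M g}" "b \<in> {g + f * s |g s. CI M g}"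
  then obtain g1 s1 g2 s2 where "a = g1 + f * s1" "CI M g1" "b = g2 + f * s2" "CI M g2" by auto
  then have "a + b = (g1 + g2) + f * (s1 + s2) \<and> CI M (g1 + g2)"
    by (auto simp: algebra_simps CI_add M)
  then show "a + b \<in> {g + f * s |g s. CI M g}" by blast
next
  fix r a assume "a \<in> {g + f * s |g s. CI M g}"
  then obtain g1 s1 where "a = g1 + f * s1" "CI M g1" by auto
  then have "r * a = r * g1 + f * (r * s1) \<and> CI M (r * g1)"
    by (auto simp: algebra_simps CI_mult_right CI_mult_left M)
  then show "r * a \<in> {g + f * s |g s. CI M g}" by blast
qed

theorem corollary3p6:
  fixes I :: "'a::idom poly set"
  assumes "is_ideal I"
    and "maximal_ideal (contract I)"
  shows "power_stable I"
proof -
  define m where "m = contract I"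
  obtain f where f: "lead_coeff f = 1" "degree f \<ge> 1"
    and fI: "\<forall>q\<in>I. \<exists>g s. q = g + f * s \<and> CI m g"
    using key[OF assms] unfolding m_def by blast
  have mI: "is_ideal m" unfolding m_def by (rule contract_ideal[OF assms(1)])
  have S: "ideal_power I t \<subseteq> {g + f * s | g s. CI (ideal_power m t) g}" for t
  proof (induction t)
    case 0
    show ?case
    proof
      fix p assume "p \<in> ideal_power I 0"
      have "p = p + f * 0 \<and> CI (ideal_power m 0) p" by (simp add: CI_def)
      then show "p \<in> {g + f * s |g s. CI (ideal_power m 0) g}" by blast
    qed
  next
    case (Suc t)
    have "{i * j |i j. i \<in> I \<and> j \<in> ideal_power I t} \<subseteq>
        {g + f * s | g s. CI (ideal_power m (Suc t)) g}"
    proof clarify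
      fix i j assume i: "i \<in> I" and j: "j \<in> ideal_power I t"
      obtain g1 s1 where 1: "i = g1 + f * s1" "CI m g1" using fI i by blast
      obtain g2 s2 where 2: "j = g2 + f * s2" "CI (ideal_power m t) g2" using Suc j by blast
      have "i * j = g1 * g2 + f * (s1 * (g2 + f * s2) + g1 * s2)"
        unfolding 1 2 by (simp add: algebra_simps)
      moreover have "CI (ideal_power m (Suc t)) (g1 * g2)"
        using CI_mult2[OF 1(2) 2(2)] by simp
      ultimately show "\<exists>g s. i * j = g + f * s \<and> CI (ideal_power m (Suc t)) g" by blast
    qed
    note sub = this
    have eq: "ideal_power I (Suc t) = ideal_gen {i * j |i j. i \<in> I \<and> j \<in> ideal_power I t}"
      by (simp add: ideal_mult_def)
    show ?case unfolding eq
      by (rule ideal_gen_least[OF S_ideal[OF ideal_power_ideal] sub])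
  qed
  show ?thesis unfolding power_stable_def
  proof (intro allI impI)
    fix t :: nat assume "t \<ge> 1"
    have "contract (ideal_power I t) \<subseteq> ideal_power m t"
    proof
      fix c assume "c \<in> contract (ideal_power I t)"
      then have "[:c:] \<in> ideal_power I t" by (simp add: contract_def)
      then obtain g s where gs: "[:c:] = g + f * s" "CI (ideal_power m t) g" using S by blast
      let ?M = "ideal_power m t"
      have M: "is_ideal ?M" by (rule ideal_power_ideal)
      have "\<forall>k\<ge>1. coeff (f * s) k \<in> ?M"
      proof (intro allI impI)
        fix k :: nat assume k: "k \<ge> 1"
        have "f * s = [:c:] - g" using gs(1) by simp
        then have "coeff (f * s) k = - coeff g k" using k by (simp add: coeff_pCons split: nat.split)
        then show "coeff (f * s) k \<in> ?M" using gs(2) ideal_neg[OF M] unfolding CI_def by metis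
      qed
      then have "CI ?M s" by (rule monic_CI[OF M f])
      then have "CI ?M (f * s)" by (rule CI_mult_right[OF M])
      then have "CI ?M [:c:]" using gs CI_add[OF M] by metis
      then show "c \<in> ?M" unfolding CI_def by (metis coeff_pCons_0)
    qed
    moreover have "ideal_power m t \<subseteq> contract (ideal_power I t)"
      unfolding m_def by (rule easy_dir[OF assms(1)])
    ultimately show "contract (ideal_power I t) = ideal_power (contract I) t"
      unfolding m_def by blast
  qed
qed

end
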